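(* Let $N\ge2$ and let $\lambda_{\max}^N$ be the largest eigenvalue of an $N\times N$ random matrix from the GOE or from the GUE. Then $\lambda_{\max}^N$ is not infinitely divisible.
   Context: The GOE (resp. GUE) is the ensemble of $N\times N$ real symmetric (resp. complex Hermitian) random matrices $H$ whose independent entries (modulo symmetry) are centered Gaussian, with density proportional to $\exp(-\tfrac{\beta}{4}\mathrm{tr}H^2)$, $\beta=1$ (resp. $\beta=2$); the ordered eigenvalues $\lambda_1\le\dots\le\lambda_N$ have joint density proportional to $\prod_{i<j}|\lambda_i-\lambda_j|^\beta\exp(-\tfrac\beta4\sum_i\lambda_i^2)$. A random variable $X$ is infinitely divisible if for each $n\ge1$ there are i.i.d. $X_1,\dots,X_n$ with $X_1+\cdots+X_n$ equal in distribution to $X$. *)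

theory Defs
  imports "HOL-Probability.Probability"
begin

text \<open>Unnormalised joint density of the (unordered) eigenvalues of an N x N matrix
  from the Gaussian beta-ensemble (beta = 1: GOE, beta = 2: GUE), on R^N represented
  as functions {..<N} -> real.\<close>
definition ge_weight :: "nat \<Rightarrow> nat \<Rightarrow> (nat \<Rightarrow> real) \<Rightarrow> real" where
  "ge_weight \<beta> N x =
     (\<Prod>i<N. \<Prod>j\<in>{i<..<N}. \<bar>x i - x j\<bar> ^ \<beta>) * exp (- (real \<beta> / 4) * (\<Sum>i<N. (x i)\<^sup>2))"

definition ge_eigen_law :: "nat \<Rightarrow> nat \<Rightarrow> (nat \<Rightarrow> real) measure" where
  "ge_eigen_law \<beta> N =
     (let M = PiM {..<N} (\<lambda>_. lborel);
          Z = (\<integral>\<^sup>+ x. ennreal (ge_weight \<beta> N x) \<partial>M)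
      in density M (\<lambda>x. ennreal (ge_weight \<beta> N x) / Z))"

definition lambda_max_law :: "nat \<Rightarrow> nat \<Rightarrow> real measure" where
  "lambda_max_law \<beta> N = distr (ge_eigen_law \<beta> N) borel (\<lambda>x. Max (x ` {..<N}))"

fun conv_pow :: "real measure \<Rightarrow> nat \<Rightarrow> real measure" where
  "conv_pow \<nu> 0 = return borel 0"
| "conv_pow \<nu> (Suc n) = convolution \<nu> (conv_pow \<nu> n)"

definition infinitely_divisible :: "real measure \<Rightarrow> bool" where
  "infinitely_divisible \<mu> \<longleftrightarrow>
     (\<forall>n\<ge>1. \<exists>\<nu>. prob_space \<nu> \<and> sets \<nu> = sets borel \<and> conv_pow \<nu> n = \<mu>)"

end

theory Submission
  imports Defs
begin


lemma n_exp_bounds: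
  fixes y :: real and n :: nat assumes "n > 0"
  shows "y \<le> real n * (exp (y / real n) - 1)" "real n * (exp (y / real n) - 1) \<le> y * exp (y / real n)"
proof -
  let ?u = "y / real n"
  have nn: "real n > 0" using assms by simp
  have "1 + ?u \<le> exp ?u" by (rule exp_ge_add_one_self)
  hence "?u \<le> exp ?u - 1" by linarith
  hence "real n * ?u \<le> real n * (exp ?u - 1)" using nn by (intro mult_left_mono) auto
  thus "y \<le> real n * (exp ?u - 1)" using nn by simp
  have "1 + (-?u) \<le> exp (-?u)" by (rule exp_ge_add_one_self)
  hence "exp ?u * (1 - ?u) \<le> exp ?u * exp (-?u)" by (intro mult_left_mono) auto
  hence "exp ?u - 1 \<le> ?u * exp ?u" by (simp add: exp_minus field_simps)
  hence "real n * (exp ?u - 1) \<le> real n * (?u * exp ?u)" using nn by (intro mult_left_mono) auto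
  thus "real n * (exp ?u - 1) \<le> y * exp ?u" using nn by simp
qed

lemma n_powr_limit:
  fixes p :: real assumes "p > 0"
  shows "(\<lambda>n. real n * (p powr (1 / real n) - 1)) \<longlonglongrightarrow> ln p"
proof (rule tendsto_sandwich[of "\<lambda>n. ln p" _ _ "\<lambda>n. ln p * exp (ln p / real n)"])
  have eq: "\<And>n. n > 0 \<Longrightarrow> p powr (1 / real n) = exp (ln p / real n)"
    using assms by (simp add: powr_def)
  show "\<forall>\<^sub>F n in sequentially. ln p \<le> real n * (p powr (1 / real n) - 1)"
    using eventually_gt_at_top[of 0] by eventually_elim (simp add: eq n_exp_bounds)
  show "\<forall>\<^sub>F n in sequentially. real n * (p powr (1 / real n) - 1) \<le> ln p * exp (ln p / real n)"
    using eventually_gt_at_top[of 0] by eventually_elim (simp add: eq n_exp_bounds)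
  show "(\<lambda>n. ln p) \<longlonglongrightarrow> ln p" by simp
  have "(\<lambda>n. ln p / real n) \<longlonglongrightarrow> 0" by (rule tendsto_divide_0[OF tendsto_const]) (rule filterlim_at_top_imp_at_infinity[OF filterlim_real_sequentially])
  hence "(\<lambda>n. ln p * exp (ln p / real n)) \<longlonglongrightarrow> ln p * exp 0" by (intro tendsto_intros)
  thus "(\<lambda>n. ln p * exp (ln p / real n)) \<longlonglongrightarrow> ln p" by simp
qed

lemma conv_pow_props:
  assumes "prob_space \<nu>" "sets \<nu> = sets borel"
  shows "prob_space (conv_pow \<nu> n) \<and> sets (conv_pow \<nu> n) = sets borel"
proof (induction n)
  case 0 thus ?case by (auto intro: prob_space_return)
next
  case (Suc n)
  then have p: "prob_space (conv_pow \<nu> n)" and s: "sets (conv_pow \<nu> n) = sets borel" by auto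
  interpret pair_prob_space \<nu> "conv_pow \<nu> n" using assms(1) p by (simp add: pair_prob_space_def pair_sigma_finite_def prob_space_imp_sigma_finite)
  have ss: "sets (\<nu> \<Otimes>\<^sub>M conv_pow \<nu> n) = sets (borel \<Otimes>\<^sub>M borel)"
    by (rule sets_pair_measure_cong[OF assms(2) s])
  have "(\<lambda>(x, y). x + y) \<in> borel_measurable (\<nu> \<Otimes>\<^sub>M conv_pow \<nu> n)"
    unfolding measurable_cong_sets[OF ss refl] by measurable
  hence "prob_space (distr (\<nu> \<Otimes>\<^sub>M conv_pow \<nu> n) borel (\<lambda>(x, y). x + y))"
    by (intro P.prob_space_distr)
  thus ?case by (simp add: convolution_def)
qed

lemma mgf_conv_pow:
  assumes "prob_space \<nu>" "sets \<nu> = sets borel"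
  shows "(\<integral>\<^sup>+ x. ennreal (exp (t * x)) \<partial>conv_pow \<nu> n) = (\<integral>\<^sup>+ x. ennreal (exp (t * x)) \<partial>\<nu>) ^ n"
proof (induction n)
  case 0 thus ?case by (simp add: nn_integral_return)
next
  case (Suc n)
  have p: "prob_space (conv_pow \<nu> n)" and s: "sets (conv_pow \<nu> n) = sets borel"
    using conv_pow_props[OF assms] by auto
  have "(\<integral>\<^sup>+ x. ennreal (exp (t * x)) \<partial>conv_pow \<nu> (Suc n))
      = (\<integral>\<^sup>+x. \<integral>\<^sup>+y. ennreal (exp (t * (x + y))) \<partial>conv_pow \<nu> n \<partial>\<nu>)"
    using p s assms by (simp add: nn_integral_convolution prob_space.finite_measure)
  also have "\<dots> = (\<integral>\<^sup>+x. ennreal (exp (t * x)) * (\<integral>\<^sup>+y. ennreal (exp (t * y)) \<partial>conv_pow \<nu> n) \<partial>\<nu>)"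
    by (subst nn_integral_cmult[symmetric]) (auto simp: measurable_cong_sets[OF s refl] distrib_left exp_add ennreal_mult intro!: nn_integral_cong)
  also have "\<dots> = (\<integral>\<^sup>+x. ennreal (exp (t * x)) \<partial>\<nu>) * (\<integral>\<^sup>+ x. ennreal (exp (t * x)) \<partial>\<nu>) ^ n"
    by (subst Suc) (simp add: nn_integral_multc measurable_cong_sets[OF assms(2) refl])
  finally show ?case by simp
qed




lemma pt_ineq:
  fixes s h x :: real
  shows "4 * exp ((s+h)*x) + 4 * exp ((s+3*h)*x) \<le> exp (s*x) + 6 * exp ((s+2*h)*x) + exp ((s+4*h)*x)"
proof -
  define a u where "a = exp (s*x)" and "u = exp (h*x)"
  have e: "exp ((s + of_nat k * h) * x) = a * u ^ k" for k :: nat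
    by (simp add: a_def u_def exp_add distrib_right exp_of_nat_mult[symmetric] mult.assoc)
  have e1: "exp ((s+h)*x) = a*u" using e[of 1] by simp
  have e2: "exp ((s+2*h)*x) = a*u^2" using e[of 2] by simp
  have e3: "exp ((s+3*h)*x) = a*u^3" using e[of 3] by simp
  have e4: "exp ((s+4*h)*x) = a*u^4" using e[of 4] by simp
  have "0 \<le> a * (u - 1)^4" by (simp add: a_def)
  moreover have "a + 6*(a*u^2) + a*u^4 - (4*(a*u) + 4*(a*u^3)) = a * (u - 1)^4" by algebra
  ultimately show ?thesis by (simp add: e1 e2 e3 e4 a_def[symmetric])
qed

lemma enn3: fixes a b c :: real assumes "0\<le>a" "0\<le>b" "0\<le>c"
  shows "ennreal (a + 6*b + c) = ennreal a + 6 * ennreal b + ennreal c"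
proof -
  have "ennreal (a + 6*b + c) = ennreal (a + 6*b) + ennreal c" using assms by (intro ennreal_plus) auto
  also have "ennreal (a + 6*b) = ennreal a + ennreal (6*b)" using assms by (intro ennreal_plus) auto
  also have "ennreal (6*b) = ennreal 6 * ennreal b" using assms by (intro ennreal_mult) auto
  finally show ?thesis by simp
qed
lemma enn2: fixes a b :: real assumes "0\<le>a" "0\<le>b"
  shows "ennreal (4*a + 4*b) = 4 * ennreal a + 4 * ennreal b"
proof -
  have "ennreal (4*a + 4*b) = ennreal (4*a) + ennreal (4*b)" using assms by (intro ennreal_plus) auto
  also have "ennreal (4*a) = ennreal 4 * ennreal a" using assms by (intro ennreal_mult) auto
  also have "ennreal (4*b) = ennreal 4 * ennreal b" using assms by (intro ennreal_mult) auto
  finally show ?thesis by simp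
qed

lemma ID_diff4:
  assumes ID: "infinitely_divisible \<mu>"
    and fin: "\<And>t. (\<integral>\<^sup>+x. ennreal (exp (t*x)) \<partial>\<mu>) < \<infinity>"
  defines "F \<equiv> \<lambda>t. enn2real (\<integral>\<^sup>+x. ennreal (exp (t*x)) \<partial>\<mu>)"
  shows "4 * ln (F (s+h)) + 4 * ln (F (s+3*h)) \<le> ln (F s) + 6 * ln (F (s+2*h)) + ln (F (s+4*h))"
proof -
  have main: "F t > 0 \<and> 4 * F (s+h) powr (1/real n) + 4 * F (s+3*h) powr (1/real n)
      \<le> F s powr (1/real n) + 6 * F (s+2*h) powr (1/real n) + F (s+4*h) powr (1/real n)"
    if n: "n > 0" for n t
  proof -
    have "n \<ge> 1" using n by simp
    hence "\<exists>\<nu>. prob_space \<nu> \<and> sets \<nu> = sets borel \<and> conv_pow \<nu> n = \<mu>"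
      using ID unfolding infinitely_divisible_def by blast
    then obtain \<nu> where p: "prob_space \<nu>" and sb: "sets \<nu> = sets borel" and cv: "conv_pow \<nu> n = \<mu>"
      by blast
    interpret prob_space \<nu> by (rule p)
    define Mn where "Mn = (\<lambda>t. \<integral>\<^sup>+x. ennreal (exp (t*x)) \<partial>\<nu>)"
    have pw: "Mn t ^ n = (\<integral>\<^sup>+x. ennreal (exp (t*x)) \<partial>\<mu>)" for t
      unfolding Mn_def using mgf_conv_pow[OF p sb, where t=t and n=n] cv by simp
    have mfin: "Mn t < \<infinity>" for t
    proof -
      have "Mn t \<noteq> \<top>"
      proof
        assume "Mn t = \<top>"
        hence "Mn t ^ n = \<top>" using n by (simp add: power_eq_top_ennreal)
        with fin[of t] pw[of t] show False by simp
      qed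
      thus ?thesis by (simp add: less_top)
    qed
    have mpos: "Mn t > 0" for t
    proof (rule ccontr)
      assume "\<not> Mn t > 0"
      hence "Mn t = 0" by simp
      hence "AE x in \<nu>. ennreal (exp (t*x)) = 0" unfolding Mn_def
        by (subst nn_integral_0_iff_AE[symmetric]) (auto simp: measurable_cong_sets[OF sb refl])
      hence "AE x in \<nu>. False" by simp
      thus False by (simp add: AE_False emeasure_space_1)
    qed
    define m where "m = (\<lambda>t. enn2real (Mn t))"
    have mp: "m t > 0" for t using mfin[of t] mpos[of t] unfolding m_def
      by (simp add: enn2real_positive_iff)
    have em: "ennreal (m t) = Mn t" for t using mfin[of t] unfolding m_def by simp
    have Fm: "F t = m t ^ n" for t unfolding F_def pw[symmetric] em[symmetric]
      using mp[of t] by (simp add: ennreal_power less_imp_le)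
    have mF: "m t = F t powr (1/real n)" for t
    proof -
      have "F t powr (1/real n) = (m t powr real n) powr (1/real n)"
        using mp[of t] by (simp add: Fm powr_realpow)
      also have "\<dots> = m t" using n mp[of t] by (simp add: powr_powr)
      finally show ?thesis by simp
    qed
    have Fpos: "F t > 0" using mp[of t] by (simp add: Fm)
    have meas: "(\<lambda>x. ennreal (exp (c*x))) \<in> borel_measurable \<nu>" for c
      by (simp add: measurable_cong_sets[OF sb refl])
    have f1: "(\<lambda>x. ennreal (exp (s*x) + 6 * exp ((s+2*h)*x) + exp ((s+4*h)*x)))
       = (\<lambda>x. ennreal (exp (s*x)) + 6 * ennreal (exp ((s+2*h)*x)) + ennreal (exp ((s+4*h)*x)))"
      by (intro ext enn3 enn2) auto
    have f2: "(\<lambda>x. ennreal (4 * exp ((s+h)*x) + 4 * exp ((s+3*h)*x)))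
       = (\<lambda>x. 4 * ennreal (exp ((s+h)*x)) + 4 * ennreal (exp ((s+3*h)*x)))"
      by (intro ext enn3 enn2) auto
    have "(\<integral>\<^sup>+x. ennreal (4 * exp ((s+h)*x) + 4 * exp ((s+3*h)*x)) \<partial>\<nu>)
        \<le> (\<integral>\<^sup>+x. ennreal (exp (s*x) + 6 * exp ((s+2*h)*x) + exp ((s+4*h)*x)) \<partial>\<nu>)"
      by (intro nn_integral_mono ennreal_leI pt_ineq)
    also have "(\<integral>\<^sup>+x. ennreal (exp (s*x) + 6 * exp ((s+2*h)*x) + exp ((s+4*h)*x)) \<partial>\<nu>)
        = Mn s + 6 * Mn (s+2*h) + Mn (s+4*h)"
      unfolding Mn_def f1
      by (simp add: nn_integral_add nn_integral_cmult measurable_cong_sets[OF sb refl])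
    also have "(\<integral>\<^sup>+x. ennreal (4 * exp ((s+h)*x) + 4 * exp ((s+3*h)*x)) \<partial>\<nu>)
        = 4 * Mn (s+h) + 4 * Mn (s+3*h)"
      unfolding Mn_def f2
      by (simp add: nn_integral_add nn_integral_cmult measurable_cong_sets[OF sb refl])
    finally have le: "4 * Mn (s+h) + 4 * Mn (s+3*h) \<le> Mn s + 6 * Mn (s+2*h) + Mn (s+4*h)" .
    have g1: "4 * Mn (s+h) + 4 * Mn (s+3*h) = ennreal (4 * m (s+h) + 4 * m (s+3*h))"
      using mp[of "s+h"] mp[of "s+3*h"] by (subst enn2) (auto simp: em less_imp_le)
    have g2: "Mn s + 6 * Mn (s+2*h) + Mn (s+4*h) = ennreal (m s + 6 * m (s+2*h) + m (s+4*h))"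
      using mp[of "s"] mp[of "s+2*h"] mp[of "s+4*h"] by (subst enn3) (auto simp: em less_imp_le)
    have "ennreal (4 * m (s+h) + 4 * m (s+3*h)) \<le> ennreal (m s + 6 * m (s+2*h) + m (s+4*h))"
      using le g1 g2 by simp
    hence "4 * m (s+h) + 4 * m (s+3*h) \<le> m s + 6 * m (s+2*h) + m (s+4*h)"
      using mp[of s] mp[of "s+2*h"] mp[of "s+4*h"] by (subst (asm) ennreal_le_iff) auto
    thus ?thesis using Fpos by (simp add: mF)
  qed
  have Fp: "F t > 0" for t using main[of 1] by simp
  define L where "L = ln (F s) + 6 * ln (F (s+2*h)) + ln (F (s+4*h)) - (4 * ln (F (s+h)) + 4 * ln (F (s+3*h)))"
  let ?g = "\<lambda>t n. real n * (F t powr (1 / real n) - 1)"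
  have "(\<lambda>n. ?g s n + 6 * ?g (s+2*h) n + ?g (s+4*h) n - (4 * ?g (s+h) n + 4 * ?g (s+3*h) n)) \<longlonglongrightarrow> L"
    unfolding L_def by (intro tendsto_intros n_powr_limit Fp)
  moreover have "\<forall>n\<ge>1. 0 \<le> ?g s n + 6 * ?g (s+2*h) n + ?g (s+4*h) n - (4 * ?g (s+h) n + 4 * ?g (s+3*h) n)"
  proof (intro allI impI)
    fix n :: nat assume "n \<ge> 1"
    hence n: "n > 0" by simp
    have eq: "?g s n + 6 * ?g (s+2*h) n + ?g (s+4*h) n - (4 * ?g (s+h) n + 4 * ?g (s+3*h) n)
      = real n * ((F s powr (1/real n) + 6 * F (s+2*h) powr (1/real n) + F (s+4*h) powr (1/real n))
         - (4 * F (s+h) powr (1/real n) + 4 * F (s+3*h) powr (1/real n)))"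
      by (simp add: algebra_simps)
    show "0 \<le> ?g s n + 6 * ?g (s+2*h) n + ?g (s+4*h) n - (4 * ?g (s+h) n + 4 * ?g (s+3*h) n)"
      unfolding eq using main[OF n, of 0] by simp
  qed
  ultimately have "0 \<le> L" by (intro LIMSEQ_le_const) blast+
  thus ?thesis unfolding L_def by simp
qed




lemma gauss_nn:
  fixes c s :: real assumes c: "c > 0"
  shows "(\<integral>\<^sup>+u. ennreal (exp (s*u - c*u\<^sup>2)) \<partial>lborel) = ennreal (sqrt (pi/c) * exp (s\<^sup>2/(4*c)))"
proof -
  define \<mu> where "\<mu> = s/(2*c)"
  define \<sigma> where "\<sigma> = sqrt (1/(2*c))"
  have sp: "\<sigma> > 0" using c by (simp add: \<sigma>_def)
  have s2: "\<sigma>\<^sup>2 = 1/(2*c)" using c by (simp add: \<sigma>_def)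
  have pt: "exp (s*u - c*u\<^sup>2) = sqrt (pi/c) * exp (s\<^sup>2/(4*c)) * normal_density \<mu> \<sigma> u" for u
  proof -
    have h1: "sqrt (pi / c) * normal_density \<mu> \<sigma> u = exp (- c * (u - \<mu>)\<^sup>2)"
      unfolding normal_density_def s2 using c by (simp add: field_simps)
    have h2: "exp (s\<^sup>2/(4*c)) * exp (- c * (u - \<mu>)\<^sup>2) = exp (s*u - c*u\<^sup>2)"
      unfolding exp_add[symmetric] \<mu>_def using c by (simp add: field_simps power2_eq_square)
    have "sqrt (pi/c) * exp (s\<^sup>2/(4*c)) * normal_density \<mu> \<sigma> u
        = exp (s\<^sup>2/(4*c)) * (sqrt (pi / c) * normal_density \<mu> \<sigma> u)" by (simp add: ac_simps)
    also have "\<dots> = exp (s*u - c*u\<^sup>2)" by (simp only: h1 h2)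
    finally show ?thesis by simp
  qed
  have "(\<integral>\<^sup>+u. ennreal (exp (s*u - c*u\<^sup>2)) \<partial>lborel)
      = (\<integral>\<^sup>+u. ennreal (sqrt (pi/c) * exp (s\<^sup>2/(4*c))) * ennreal (normal_density \<mu> \<sigma> u) \<partial>lborel)"
    using c by (intro nn_integral_cong) (simp add: pt ennreal_mult)
  also have "\<dots> = ennreal (sqrt (pi/c) * exp (s\<^sup>2/(4*c))) * (\<integral>\<^sup>+u. ennreal (normal_density \<mu> \<sigma> u) \<partial>lborel)"
    by (rule nn_integral_cmult) simp
  also have "(\<integral>\<^sup>+u. ennreal (normal_density \<mu> \<sigma> u) \<partial>lborel) = 1"
    using sp by (subst nn_integral_eq_integral) (auto simp: integral_normal_density)
  finally show ?thesis by simp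
qed

lemma enn_double: assumes h: "0 \<le> x" shows "ennreal x + ennreal x = ennreal (2*x)"
  using ennreal_plus[OF h h] by (simp only: mult_2)

lemma gauss_abs_bound:
  fixes c s m :: real assumes c: "c > 0" and m: "m \<ge> 0"
  shows "(\<integral>\<^sup>+u. ennreal (exp (s*u + m*\<bar>u\<bar> - c*u\<^sup>2)) \<partial>lborel)
    \<le> ennreal (2 * sqrt (pi/c) * exp ((\<bar>s\<bar> + m)\<^sup>2/(4*c)))"
proof -
  have pt: "exp (s*u + m*\<bar>u\<bar> - c*u\<^sup>2) \<le> exp ((s+m)*u - c*u\<^sup>2) + exp ((s-m)*u - c*u\<^sup>2)" for u
  proof (cases "u \<ge> 0")
    case True
    hence "exp (s*u + m*\<bar>u\<bar> - c*u\<^sup>2) = exp ((s+m)*u - c*u\<^sup>2)" by (simp add: algebra_simps)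
    thus ?thesis by (simp add: add_increasing2)
  next
    case False
    hence "exp (s*u + m*\<bar>u\<bar> - c*u\<^sup>2) = exp ((s-m)*u - c*u\<^sup>2)" by (simp add: algebra_simps)
    thus ?thesis by simp
  qed
  have q1: "(s+m)\<^sup>2 \<le> (\<bar>s\<bar> + m)\<^sup>2"
  proof -
    have "\<bar>s+m\<bar> \<le> \<bar>s\<bar> + m" using m by linarith
    hence "\<bar>s+m\<bar>\<^sup>2 \<le> (\<bar>s\<bar> + m)\<^sup>2" by (intro power_mono) auto
    thus ?thesis by simp
  qed
  have q2: "(s-m)\<^sup>2 \<le> (\<bar>s\<bar> + m)\<^sup>2"
  proof -
    have "\<bar>s-m\<bar> \<le> \<bar>s\<bar> + m" using m by linarith
    hence "\<bar>s-m\<bar>\<^sup>2 \<le> (\<bar>s\<bar> + m)\<^sup>2" by (intro power_mono) auto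
    thus ?thesis by simp
  qed
  have b1: "sqrt (pi/c) * exp ((s+m)\<^sup>2/(4*c)) \<le> sqrt (pi/c) * exp ((\<bar>s\<bar> + m)\<^sup>2/(4*c))"
    using c q1 q2 by (intro mult_left_mono) (auto intro: divide_right_mono)
  have b2: "sqrt (pi/c) * exp ((s-m)\<^sup>2/(4*c)) \<le> sqrt (pi/c) * exp ((\<bar>s\<bar> + m)\<^sup>2/(4*c))"
    using c q1 q2 by (intro mult_left_mono) (auto intro: divide_right_mono)
  have "(\<integral>\<^sup>+u. ennreal (exp (s*u + m*\<bar>u\<bar> - c*u\<^sup>2)) \<partial>lborel)
     \<le> (\<integral>\<^sup>+u. ennreal (exp ((s+m)*u - c*u\<^sup>2)) + ennreal (exp ((s-m)*u - c*u\<^sup>2)) \<partial>lborel)"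
    by (intro nn_integral_mono) (simp add: pt ennreal_plus[symmetric] del: ennreal_plus)
  also have "\<dots> = ennreal (sqrt (pi/c) * exp ((s+m)\<^sup>2/(4*c))) + ennreal (sqrt (pi/c) * exp ((s-m)\<^sup>2/(4*c)))"
    by (simp add: nn_integral_add gauss_nn[OF c])
  also have "\<dots> \<le> ennreal (sqrt (pi/c) * exp ((\<bar>s\<bar> + m)\<^sup>2/(4*c))) + ennreal (sqrt (pi/c) * exp ((\<bar>s\<bar> + m)\<^sup>2/(4*c)))"
    by (intro add_mono ennreal_leI b1 b2)
  also have "\<dots> = ennreal (2 * sqrt (pi/c) * exp ((\<bar>s\<bar> + m)\<^sup>2/(4*c)))"
    using c by (subst enn_double) (auto simp: mult.assoc)
  finally show ?thesis .
qed

lemma psf_lborel: "product_sigma_finite (\<lambda>_::nat. lborel)"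
  unfolding product_sigma_finite_def by (simp add: lborel.sigma_finite_measure_axioms)

lemma prod_gauss_bound:
  fixes s :: "nat \<Rightarrow> real" and c m :: real and N :: nat
  assumes c: "c > 0" and m: "m \<ge> 0"
  shows "(\<integral>\<^sup>+x. ennreal (\<Prod>i<N. exp (s i * x i + m*\<bar>x i\<bar> - c*(x i)\<^sup>2)) \<partial>PiM {..<N} (\<lambda>_. lborel))
     \<le> ennreal (\<Prod>i<N. 2 * sqrt (pi/c) * exp ((\<bar>s i\<bar> + m)\<^sup>2/(4*c)))"
proof -
  interpret product_sigma_finite "\<lambda>_::nat. lborel" by (rule psf_lborel)
  define r where "r = (\<lambda>i. enn2real (\<integral>\<^sup>+u. ennreal (exp (s i * u + m*\<bar>u\<bar> - c*u\<^sup>2)) \<partial>lborel))"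
  have bd: "(\<integral>\<^sup>+u. ennreal (exp (s i * u + m*\<bar>u\<bar> - c*u\<^sup>2)) \<partial>lborel)
     \<le> ennreal (2 * sqrt (pi/c) * exp ((\<bar>s i\<bar> + m)\<^sup>2/(4*c)))" for i
    by (rule gauss_abs_bound[OF c m])
  have er: "(\<integral>\<^sup>+u. ennreal (exp (s i * u + m*\<bar>u\<bar> - c*u\<^sup>2)) \<partial>lborel) = ennreal (r i)" for i
    unfolding r_def using le_less_trans[OF bd[of i] ennreal_less_top] by (intro ennreal_enn2real[symmetric]) auto
  have rle: "r i \<le> 2 * sqrt (pi/c) * exp ((\<bar>s i\<bar> + m)\<^sup>2/(4*c))" for i
    using bd[of i] unfolding er using c by (subst (asm) ennreal_le_iff) (auto intro: mult_nonneg_nonneg)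
  have r0: "0 \<le> r i" for i unfolding r_def by simp
  have "(\<integral>\<^sup>+x. ennreal (\<Prod>i<N. exp (s i * x i + m*\<bar>x i\<bar> - c*(x i)\<^sup>2)) \<partial>PiM {..<N} (\<lambda>_. lborel))
      = (\<integral>\<^sup>+x. (\<Prod>i<N. ennreal (exp (s i * x i + m*\<bar>x i\<bar> - c*(x i)\<^sup>2))) \<partial>PiM {..<N} (\<lambda>_. lborel))"
    by (intro nn_integral_cong) (simp add: prod_ennreal)
  also have "\<dots> = (\<Prod>i<N. \<integral>\<^sup>+u. ennreal (exp (s i * u + m*\<bar>u\<bar> - c*u\<^sup>2)) \<partial>lborel)"
    by (rule product_nn_integral_prod[where f="\<lambda>i u. ennreal (exp (s i * u + m*\<bar>u\<bar> - c*u\<^sup>2))"]) auto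
  also have "\<dots> = ennreal (\<Prod>i<N. r i)" by (simp add: er prod_ennreal r0)
  also have "\<dots> \<le> ennreal (\<Prod>i<N. 2 * sqrt (pi/c) * exp ((\<bar>s i\<bar> + m)\<^sup>2/(4*c)))"
    by (intro ennreal_leI prod_mono) (simp add: r0 rle)
  finally show ?thesis .
qed

lemma abs_pow_exp_bound:
  fixes a b :: real and \<beta> :: nat
  shows "\<bar>a - b\<bar> ^ \<beta> \<le> exp (real \<beta> * (\<bar>a\<bar> + \<bar>b\<bar>))"
proof -
  have "\<bar>a - b\<bar> \<le> \<bar>a\<bar> + \<bar>b\<bar>" by (rule abs_triangle_ineq4)
  also have "\<dots> \<le> exp (\<bar>a\<bar> + \<bar>b\<bar>)" using exp_ge_add_one_self[of "\<bar>a\<bar> + \<bar>b\<bar>"] by linarith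
  finally have "\<bar>a - b\<bar> ^ \<beta> \<le> exp (\<bar>a\<bar> + \<bar>b\<bar>) ^ \<beta>" by (intro power_mono) auto
  also have "\<dots> = exp (real \<beta> * (\<bar>a\<bar> + \<bar>b\<bar>))" by (simp add: exp_of_nat_mult)
  finally show ?thesis .
qed

lemma W_upper:
  fixes \<beta> N :: nat and x :: "nat \<Rightarrow> real"
  shows "ge_weight \<beta> N x \<le> (\<Prod>i<N. exp (0 * x i + real (2*N*\<beta>) * \<bar>x i\<bar> - (real \<beta>/4)*(x i)\<^sup>2))"
proof -
  let ?a = "\<lambda>i. \<bar>x i\<bar>"
  have "(\<Prod>i<N. \<Prod>j\<in>{i<..<N}. \<bar>x i - x j\<bar> ^ \<beta>)
      \<le> (\<Prod>i<N. \<Prod>j\<in>{i<..<N}. exp (real \<beta> * (?a i + ?a j)))"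
    by (intro prod_mono conjI prod_nonneg abs_pow_exp_bound) auto
  also have "\<dots> = exp (\<Sum>i<N. \<Sum>j\<in>{i<..<N}. real \<beta> * (?a i + ?a j))"
    by (simp add: exp_sum)
  also have "\<dots> \<le> exp (\<Sum>i<N. \<Sum>j<N. real \<beta> * (?a i + ?a j))"
    by (subst exp_le_cancel_iff, intro sum_mono sum_mono2) auto
  also have "(\<Sum>i<N. \<Sum>j<N. real \<beta> * (?a i + ?a j)) = real (2*N*\<beta>) * (\<Sum>i<N. ?a i)"
    by (simp add: sum.distrib sum_distrib_left distrib_left sum.swap[of _ "{..<N}" "{..<N}"] algebra_simps)
  finally have V: "(\<Prod>i<N. \<Prod>j\<in>{i<..<N}. \<bar>x i - x j\<bar> ^ \<beta>) \<le> exp (real (2*N*\<beta>) * (\<Sum>i<N. ?a i))" .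
  have "ge_weight \<beta> N x \<le> exp (real (2*N*\<beta>) * (\<Sum>i<N. ?a i)) * exp (- (real \<beta> / 4) * (\<Sum>i<N. (x i)\<^sup>2))"
    unfolding ge_weight_def by (intro mult_right_mono V) auto
  also have "\<dots> = (\<Prod>i<N. exp (0 * x i + real (2*N*\<beta>) * \<bar>x i\<bar> - (real \<beta>/4)*(x i)\<^sup>2))"
    by (simp add: exp_add[symmetric] exp_sum[symmetric] sum_distrib_left sum_subtractf sum_negf)
  finally show ?thesis .
qed

definition Qf :: "nat \<Rightarrow> nat \<Rightarrow> real \<Rightarrow> ennreal" where
  "Qf \<beta> N t = (\<integral>\<^sup>+x. ennreal (exp (t * Max (x ` {..<N})) * ge_weight \<beta> N x) \<partial>PiM {..<N} (\<lambda>_. lborel))"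

definition gg :: "nat \<Rightarrow> real \<Rightarrow> real \<Rightarrow> (nat \<Rightarrow> real) \<Rightarrow> (nat \<Rightarrow> real) \<Rightarrow> real" where
  "gg N m c s x = (\<Prod>i<N. exp (s i * x i + m*\<bar>x i\<bar> - c*(x i)\<^sup>2))"

lemma gg_merge:
  "exp (\<Sum>i<N. s i * x i) * gg N m c (\<lambda>_. 0) x = gg N m c s x"
  unfolding gg_def by (simp add: exp_sum[symmetric] exp_add[symmetric] sum.distrib[symmetric] algebra_simps)

lemma gg_int:
  assumes c: "c > 0" and m: "m \<ge> 0"
  shows "(\<integral>\<^sup>+x. ennreal (gg N m c s x) \<partial>PiM {..<N} (\<lambda>_. lborel))
     \<le> ennreal ((2 * sqrt (pi/c))^N * exp ((\<Sum>i<N. (\<bar>s i\<bar> + m)\<^sup>2) / (4*c)))"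
proof -
  have "(\<integral>\<^sup>+x. ennreal (gg N m c s x) \<partial>PiM {..<N} (\<lambda>_. lborel))
     \<le> ennreal (\<Prod>i<N. 2 * sqrt (pi/c) * exp ((\<bar>s i\<bar> + m)\<^sup>2/(4*c)))"
    unfolding gg_def by (rule prod_gauss_bound[OF c m])
  also have "(\<Prod>i<N. 2 * sqrt (pi/c) * exp ((\<bar>s i\<bar> + m)\<^sup>2/(4*c)))
      = (2 * sqrt (pi/c))^N * exp ((\<Sum>i<N. (\<bar>s i\<bar> + m)\<^sup>2) / (4*c))"
    by (simp add: prod.distrib exp_sum sum_divide_distrib)
  finally show ?thesis .
qed

lemma sum_if_eq: "k < N \<Longrightarrow> (\<Sum>i<N. (if i = k then A else B)) = A + (real N - 1) * (B::real)"
proof -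
  assume k: "k < N"
  have "(\<Sum>i<N. (if i = k then A else B)) = (\<Sum>i<N. B + (if i = k then A - B else 0))"
    by (intro sum.cong) auto
  also have "\<dots> = real N * B + (A - B)" using k by (simp add: sum.distrib)
  finally show ?thesis by (simp add: algebra_simps)
qed




lemma W_nonneg: "0 \<le> ge_weight \<beta> N x"
  unfolding ge_weight_def by (intro mult_nonneg_nonneg prod_nonneg) auto

lemma gg_nonneg: "0 \<le> gg N m c s x" unfolding gg_def by (intro prod_nonneg) auto

lemma gg_meas[measurable]: "(\<lambda>x. gg N m c s x) \<in> borel_measurable (PiM {..<N} (\<lambda>_. lborel))"
  unfolding gg_def by measurable

lemma Q_upper_pos:
  fixes \<beta> N :: nat and t :: real
  assumes b: "\<beta> \<ge> 1" and N: "N \<ge> 1" and t: "t \<ge> 0"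
  defines "m \<equiv> real (2*N*\<beta>)"
  shows "Qf \<beta> N t \<le> ennreal (real N * ((2 * sqrt (pi/(real \<beta>/4)))^N
            * exp (((t+m)\<^sup>2 + (real N - 1)*m\<^sup>2) / real \<beta>)))"
proof -
  define c where "c = real \<beta> / 4"
  have c: "c > 0" using b by (simp add: c_def)
  have m0: "m \<ge> 0" by (simp add: m_def)
  define sk where "sk = (\<lambda>(k::nat) (i::nat). if i = k then t else (0::real))"
  have pt: "exp (t * Max (x ` {..<N})) * ge_weight \<beta> N x \<le> (\<Sum>k<N. gg N m c (sk k) x)" for x
  proof -
    have ne: "x ` {..<N} \<noteq> {}" using N by (auto simp: lessThan_empty_iff)
    obtain k0 where k0: "k0 < N" "Max (x ` {..<N}) = x k0"
      using Max_in[OF finite_imageI[OF finite_lessThan] ne] by auto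
    have "exp (t * Max (x ` {..<N})) \<le> (\<Sum>k<N. exp (t * x k))"
      unfolding k0(2) using k0(1) by (intro member_le_sum) auto
    moreover have "ge_weight \<beta> N x \<le> gg N m c (\<lambda>_. 0) x"
      using W_upper[of \<beta> N x] unfolding gg_def m_def c_def by simp
    ultimately have "exp (t * Max (x ` {..<N})) * ge_weight \<beta> N x \<le> (\<Sum>k<N. exp (t * x k)) * gg N m c (\<lambda>_. 0) x"
      by (intro mult_mono W_nonneg sum_nonneg) auto
    also have "\<dots> = (\<Sum>k<N. gg N m c (sk k) x)"
    proof -
      have "exp (t * x k) * gg N m c (\<lambda>_. 0) x = gg N m c (sk k) x" if "k < N" for k
      proof -
        have "(\<Sum>i<N. sk k i * x i) = (\<Sum>i<N. if i = k then t * x k else 0)"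
          unfolding sk_def by (intro sum.cong) auto
        also have "\<dots> = t * x k" using that by simp
        finally have "(\<Sum>i<N. sk k i * x i) = t * x k" .
        moreover have "exp (\<Sum>i<N. sk k i * x i) * gg N m c (\<lambda>_. 0) x = gg N m c (sk k) x"
          by (rule gg_merge)
        ultimately show ?thesis by simp
      qed
      thus ?thesis by (simp add: sum_distrib_right)
    qed
    finally show ?thesis .
  qed
  have "Qf \<beta> N t \<le> (\<integral>\<^sup>+x. ennreal (\<Sum>k<N. gg N m c (sk k) x) \<partial>PiM {..<N} (\<lambda>_. lborel))"
    unfolding Qf_def by (intro nn_integral_mono ennreal_leI pt)
  also have "\<dots> = (\<Sum>k<N. \<integral>\<^sup>+x. ennreal (gg N m c (sk k) x) \<partial>PiM {..<N} (\<lambda>_. lborel))"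
    by (subst nn_integral_sum[symmetric]) (auto simp: gg_nonneg intro!: nn_integral_cong)
  also have "\<dots> \<le> (\<Sum>k<N. ennreal ((2 * sqrt (pi/c))^N * exp (((t+m)\<^sup>2 + (real N - 1)*m\<^sup>2) / real \<beta>)))"
  proof (intro sum_mono)
    fix k assume k: "k \<in> {..<N}"
    have "(\<Sum>i<N. (\<bar>sk k i\<bar> + m)\<^sup>2) = (\<Sum>i<N. (if i = k then (t+m)\<^sup>2 else m\<^sup>2))"
      unfolding sk_def using t by (intro sum.cong) auto
    also have "\<dots> = (t+m)\<^sup>2 + (real N - 1)*m\<^sup>2" using k by (simp add: sum_if_eq)
    finally have e: "(\<Sum>i<N. (\<bar>sk k i\<bar> + m)\<^sup>2) = (t+m)\<^sup>2 + (real N - 1)*m\<^sup>2" .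
    have "4 * c = real \<beta>" by (simp add: c_def)
    thus "(\<integral>\<^sup>+x. ennreal (gg N m c (sk k) x) \<partial>PiM {..<N} (\<lambda>_. lborel))
        \<le> ennreal ((2 * sqrt (pi/c))^N * exp (((t+m)\<^sup>2 + (real N - 1)*m\<^sup>2) / real \<beta>))"
      using gg_int[OF c m0, where N=N and s="sk k"] e by simp
  qed
  also have "\<dots> = ennreal (real N * ((2 * sqrt (pi/c))^N * exp (((t+m)\<^sup>2 + (real N - 1)*m\<^sup>2) / real \<beta>)))"
    using c by (subst sum_ennreal) auto
  finally show ?thesis by (simp add: c_def)
qed

lemma Q_upper_neg:
  fixes \<beta> N :: nat and u :: real
  assumes b: "\<beta> \<ge> 1" and N: "N \<ge> 1" and u: "u \<ge> 0"
  defines "m \<equiv> real (2*N*\<beta>)"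
  shows "Qf \<beta> N (-u) \<le> ennreal ((2 * sqrt (pi/(real \<beta>/4)))^N
            * exp (real N * (u / real N + m)\<^sup>2 / real \<beta>))"
proof -
  define c where "c = real \<beta> / 4"
  have c: "c > 0" using b by (simp add: c_def)
  have m0: "m \<ge> 0" by (simp add: m_def)
  define sk where "sk = (\<lambda>(i::nat). - u / real N)"
  have Np: "real N > 0" using N by simp
  have pt: "exp (- u * Max (x ` {..<N})) * ge_weight \<beta> N x \<le> gg N m c sk x" for x
  proof -
    have "(\<Sum>i<N. x i) \<le> (\<Sum>i<N. Max (x ` {..<N}))"
      by (intro sum_mono Max_ge) auto
    hence "(\<Sum>i<N. x i) \<le> real N * Max (x ` {..<N})" by simp
    hence "u * (\<Sum>i<N. x i) \<le> u * (real N * Max (x ` {..<N}))" using u by (intro mult_left_mono)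
    hence "u * (\<Sum>i<N. x i) / real N \<le> u * (real N * Max (x ` {..<N})) / real N"
      using Np by (intro divide_right_mono) auto
    hence "u * (\<Sum>i<N. x i) / real N \<le> u * Max (x ` {..<N})"
      using Np by simp
    moreover have "(\<Sum>i<N. sk i * x i) = - (u * (\<Sum>i<N. x i) / real N)"
      by (simp add: sk_def sum_distrib_left sum_divide_distrib sum_negf)
    ultimately have "- u * Max (x ` {..<N}) \<le> (\<Sum>i<N. sk i * x i)" by simp
    hence "exp (- u * Max (x ` {..<N})) \<le> exp (\<Sum>i<N. sk i * x i)" by simp
    moreover have "ge_weight \<beta> N x \<le> gg N m c (\<lambda>_. 0) x"
      using W_upper[of \<beta> N x] unfolding gg_def m_def c_def by simp
    ultimately have "exp (- u * Max (x ` {..<N})) * ge_weight \<beta> N x \<le> exp (\<Sum>i<N. sk i * x i) * gg N m c (\<lambda>_. 0) x"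
      by (intro mult_mono W_nonneg) auto
    also have "\<dots> = gg N m c sk x" by (rule gg_merge)
    finally show ?thesis .
  qed
  have "Qf \<beta> N (-u) \<le> (\<integral>\<^sup>+x. ennreal (gg N m c sk x) \<partial>PiM {..<N} (\<lambda>_. lborel))"
    unfolding Qf_def by (intro nn_integral_mono ennreal_leI) (rule pt)
  also have "\<dots> \<le> ennreal ((2 * sqrt (pi/c))^N * exp ((\<Sum>i<N. (\<bar>sk i\<bar> + m)\<^sup>2) / (4*c)))"
    by (rule gg_int[OF c m0])
  also have "(\<Sum>i<N. (\<bar>sk i\<bar> + m)\<^sup>2) = real N * (u / real N + m)\<^sup>2"
    using u Np by (simp add: sk_def)
  also have "4 * c = real \<beta>" by (simp add: c_def)
  finally show ?thesis by (simp add: c_def)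
qed

lemma Q_lower:
  fixes \<beta> N :: nat and t :: real
  assumes b: "\<beta> \<ge> 1" and N: "N \<ge> 1" and t: "t \<ge> 0"
  shows "ennreal (exp (- (real \<beta>/4) * ((2*real N+1)\<^sup>2 + 4 * real N ^ 3)) * exp (t\<^sup>2 / real \<beta>)) \<le> Qf \<beta> N t"
proof -
  interpret product_sigma_finite "\<lambda>_::nat. lborel" by (rule psf_lborel)
  define c where "c = 2*t/real \<beta> + 2*real N"
  define A where "A = (\<lambda>j::nat. if j = 0 then {c..c+1} else {2*real j..2*real j+1})"
  define Bx where "Bx = Pi\<^sub>E {..<N} A"
  define C where "C = exp (- (real \<beta>/4) * ((2*real N+1)\<^sup>2 + 4 * real N ^ 3)) * exp (t\<^sup>2 / real \<beta>)"
  have bp: "real \<beta> > 0" using b by simp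
  have N0: "0 < N" using N by simp
  have Bsets: "Bx \<in> sets (PiM {..<N} (\<lambda>_. lborel))"
    unfolding Bx_def A_def by (intro sets_PiM_I_finite) auto
  have Bmeas: "emeasure (PiM {..<N} (\<lambda>_. lborel)) Bx = 1"
    unfolding Bx_def by (subst emeasure_PiM) (auto simp: A_def emeasure_lborel_Icc intro!: prod.neutral)
  have pt: "C \<le> exp (t * Max (x ` {..<N})) * ge_weight \<beta> N x" if x: "x \<in> Bx" for x
  proof -
    have xA: "x j \<in> A j" if "j < N" for j using x that unfolding Bx_def by (auto simp: PiE_iff)
    have x0: "c \<le> x 0" "x 0 \<le> c + 1" using xA[of 0] N0 by (auto simp: A_def)
    have xj: "2*real j \<le> x j" "x j \<le> 2*real j + 1" if "j < N" "j \<noteq> 0" for j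
      using xA[of j] that by (auto simp: A_def)
    have sep: "1 \<le> \<bar>x i - x j\<bar>" if "i < j" "j < N" for i j
    proof (cases "i = 0")
      case True
      have "x j \<le> 2 * real j + 1" using xj[of j] that by auto
      moreover have "real j + 1 \<le> real N" using that by linarith
      moreover have "2 * real N \<le> c" using t bp by (simp add: c_def)
      ultimately have "1 \<le> x 0 - x j" using x0 by linarith
      thus ?thesis using True by simp
    next
      case False
      have "2 * real j \<le> x j" "x i \<le> 2 * real i + 1" using xj[of j] xj[of i] that False by auto
      moreover have "real i + 1 \<le> real j" using that by linarith
      ultimately show ?thesis by linarith
    qed
    have V: "1 \<le> (\<Prod>i<N. \<Prod>j\<in>{i<..<N}. \<bar>x i - x j\<bar> ^ \<beta>)"
      by (intro prod_ge_1 one_le_power) (auto intro!: sep)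
    have sq: "(\<Sum>i<N. (x i)\<^sup>2) \<le> (x 0)\<^sup>2 + 4 * real N ^ 3"
    proof -
      have "(\<Sum>i<N. (x i)\<^sup>2) \<le> (\<Sum>i<N. (if i = 0 then (x 0)\<^sup>2 else 4 * (real N)\<^sup>2))"
      proof (intro sum_mono)
        fix i assume i: "i \<in> {..<N}"
        show "(x i)\<^sup>2 \<le> (if i = 0 then (x 0)\<^sup>2 else 4 * (real N)\<^sup>2)"
        proof (cases "i = 0")
          case False
          have "0 \<le> x i" "x i \<le> 2 * real N" using xj[of i] i False by auto
          hence "(x i)\<^sup>2 \<le> (2 * real N)\<^sup>2" by (intro power_mono) auto
          thus ?thesis using False by (simp add: power_mult_distrib)
        qed simp
      qed
      also have "\<dots> = (x 0)\<^sup>2 + (real N - 1) * (4 * (real N)\<^sup>2)" using N0 by (simp add: sum_if_eq)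
      also have "\<dots> \<le> (x 0)\<^sup>2 + 4 * real N ^ 3"
        using N by (simp add: power2_eq_square power3_eq_cube algebra_simps)
      finally show ?thesis .
    qed
    have Mx: "x 0 \<le> Max (x ` {..<N})" using N0 by (intro Max_ge) auto
    have key: "t * x 0 - (real \<beta>/4) * (x 0)\<^sup>2 = t\<^sup>2 / real \<beta> - (real \<beta>/4) * (x 0 - 2*t/real \<beta>)\<^sup>2"
      using bp by (simp add: field_simps power2_eq_square)
    have d: "(x 0 - 2*t/real \<beta>)\<^sup>2 \<le> (2*real N+1)\<^sup>2"
      using x0 by (intro power_mono) (auto simp: c_def)
    have "- (real \<beta>/4) * ((2*real N+1)\<^sup>2 + 4 * real N ^ 3) + t\<^sup>2 / real \<beta>
        \<le> t * x 0 - (real \<beta>/4) * ((x 0)\<^sup>2 + 4 * real N ^ 3)"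
    proof -
      have d': "(real \<beta>/4) * (x 0 - 2*t/real \<beta>)\<^sup>2 \<le> (real \<beta>/4) * (2*real N+1)\<^sup>2"
        using d bp by (intro mult_left_mono) auto
      have e1: "t * x 0 - (real \<beta>/4) * ((x 0)\<^sup>2 + 4 * real N ^ 3) = (t * x 0 - (real \<beta>/4) * (x 0)\<^sup>2) - (real \<beta>/4) * (4 * real N ^ 3)"
        by (simp add: algebra_simps)
      have e2: "- (real \<beta>/4) * ((2*real N+1)\<^sup>2 + 4 * real N ^ 3) + t\<^sup>2 / real \<beta> = (t\<^sup>2 / real \<beta> - (real \<beta>/4) * (2*real N+1)\<^sup>2) - (real \<beta>/4) * (4 * real N ^ 3)"
        by (simp add: algebra_simps)
      show ?thesis unfolding e1 e2 key using d' by linarith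
    qed
    also have "\<dots> \<le> t * Max (x ` {..<N}) - (real \<beta>/4) * (\<Sum>i<N. (x i)\<^sup>2)"
      using Mx t sq bp by (intro diff_mono mult_left_mono mult_left_mono) auto
    finally have "C \<le> exp (t * Max (x ` {..<N})) * exp (- (real \<beta>/4) * (\<Sum>i<N. (x i)\<^sup>2))"
      unfolding C_def by (simp add: exp_add[symmetric])
    also have "\<dots> \<le> exp (t * Max (x ` {..<N})) * ge_weight \<beta> N x"
      unfolding ge_weight_def using V by (intro mult_left_mono) auto
    finally show ?thesis .
  qed
  have "ennreal C = (\<integral>\<^sup>+x. ennreal C * indicator Bx x \<partial>PiM {..<N} (\<lambda>_. lborel))"
    using Bsets Bmeas by (simp add: nn_integral_cmult_indicator)
  also have "\<dots> \<le> Qf \<beta> N t"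
    unfolding Qf_def by (intro nn_integral_mono) (auto simp: indicator_def intro!: ennreal_leI pt)
  finally show ?thesis unfolding C_def .
qed




lemma W_meas[measurable]: "ge_weight \<beta> N \<in> borel_measurable (PiM {..<N} (\<lambda>_. lborel))"
  unfolding ge_weight_def[abs_def] by measurable

lemma Max_meas[measurable]: "(\<lambda>x::nat\<Rightarrow>real. Max (x ` {..<N})) \<in> borel_measurable (PiM {..<N} (\<lambda>_. lborel))"
proof -
  have "(\<lambda>x::nat\<Rightarrow>real. Max ((\<lambda>i. x i) ` {..<N})) \<in> borel_measurable (PiM {..<N} (\<lambda>_. lborel))"
    by (intro borel_measurable_Max) auto
  thus ?thesis by simp
qed

lemma mgf_lmax:
  "(\<integral>\<^sup>+x. ennreal (exp (t*x)) \<partial>lambda_max_law \<beta> N) = Qf \<beta> N t / Qf \<beta> N 0"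
proof -
  let ?M = "PiM {..<N} (\<lambda>_::nat. lborel::real measure)"
  let ?Z = "Qf \<beta> N 0"
  have Z: "?Z = (\<integral>\<^sup>+x. ennreal (ge_weight \<beta> N x) \<partial>?M)" unfolding Qf_def by simp
  have gl: "ge_eigen_law \<beta> N = density ?M (\<lambda>x. ennreal (ge_weight \<beta> N x) / ?Z)"
    unfolding ge_eigen_law_def Let_def Z ..
  have meas: "(\<lambda>x. Max (x ` {..<N})) \<in> measurable (ge_eigen_law \<beta> N) borel"
    unfolding gl by (simp add: measurable_cong_sets[OF sets_density refl])
  have "(\<integral>\<^sup>+x. ennreal (exp (t*x)) \<partial>lambda_max_law \<beta> N)
      = (\<integral>\<^sup>+x. ennreal (exp (t * Max (x ` {..<N}))) \<partial>ge_eigen_law \<beta> N)"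
    unfolding lambda_max_law_def by (rule nn_integral_distr[OF meas]) simp
  also have "\<dots> = (\<integral>\<^sup>+x. ennreal (ge_weight \<beta> N x) / ?Z * ennreal (exp (t * Max (x ` {..<N}))) \<partial>?M)"
    unfolding gl by (rule nn_integral_density) auto
  also have "\<dots> = (\<integral>\<^sup>+x. ennreal (exp (t * Max (x ` {..<N})) * ge_weight \<beta> N x) / ?Z \<partial>?M)"
  proof (intro nn_integral_cong)
    fix x
    have "ennreal (ge_weight \<beta> N x) / ?Z * ennreal (exp (t * Max (x ` {..<N})))
       = ennreal (exp (t * Max (x ` {..<N}))) * ennreal (ge_weight \<beta> N x) / ?Z"
      by (simp add: ennreal_times_divide mult.commute)
    also have "\<dots> = ennreal (exp (t * Max (x ` {..<N})) * ge_weight \<beta> N x) / ?Z"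
      by (simp add: ennreal_mult W_nonneg)
    finally show "ennreal (ge_weight \<beta> N x) / ?Z * ennreal (exp (t * Max (x ` {..<N})))
       = ennreal (exp (t * Max (x ` {..<N})) * ge_weight \<beta> N x) / ?Z" .
  qed
  also have "\<dots> = Qf \<beta> N t / ?Z" unfolding Qf_def by (rule nn_integral_divide) simp
  finally show ?thesis .
qed

lemma quad_neg:
  fixes a b c :: real assumes a: "a < 0"
  shows "\<exists>h>0. a*h\<^sup>2 + b*h + c < 0"
proof -
  define h where "h = (\<bar>b\<bar> + \<bar>c\<bar> + 1) / (-a) + 1"
  have q: "(\<bar>b\<bar> + \<bar>c\<bar> + 1) / (-a) \<ge> 0" using a by (intro divide_nonneg_pos) auto
  have h1: "h \<ge> 1" using q by (simp add: h_def)
  have ah: "a * h = - (\<bar>b\<bar> + \<bar>c\<bar> + 1) + a" using a by (simp add: h_def field_simps)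
  have "b * h \<le> \<bar>b\<bar> * h" using h1 by (intro mult_right_mono) auto
  moreover have "c \<le> \<bar>c\<bar> * h"
  proof -
    have "\<bar>c\<bar> * 1 \<le> \<bar>c\<bar> * h" using h1 by (intro mult_left_mono) auto
    thus ?thesis by linarith
  qed
  moreover have "a*h\<^sup>2 = (a*h) * h" by (simp add: power2_eq_square)
  ultimately have "a*h\<^sup>2 + b*h + c \<le> (a*h) * h + \<bar>b\<bar> * h + \<bar>c\<bar> * h" by linarith
  also have "\<dots> = (a*h + \<bar>b\<bar> + \<bar>c\<bar>) * h" by (simp add: algebra_simps)
  also have "\<dots> < 0" using ah a h1 by (intro mult_neg_pos) auto
  finally show ?thesis using h1 by (intro exI[of _ h]) auto
qed

lemma ID_pos:
  assumes ID: "infinitely_divisible \<mu>"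
  shows "0 < (\<integral>\<^sup>+x. ennreal (exp (t*x)) \<partial>\<mu>)"
proof -
  obtain \<nu> where p: "prob_space \<nu>" and sb: "sets \<nu> = sets borel" and cv: "conv_pow \<nu> 1 = \<mu>"
    using ID unfolding infinitely_divisible_def by blast
  interpret prob_space \<nu> by (rule p)
  have e: "(\<integral>\<^sup>+x. ennreal (exp (t*x)) \<partial>\<mu>) = (\<integral>\<^sup>+x. ennreal (exp (t*x)) \<partial>\<nu>)"
    using mgf_conv_pow[OF p sb, where t=t and n=1] cv by simp
  show ?thesis unfolding e
  proof (rule ccontr)
    assume "\<not> 0 < (\<integral>\<^sup>+x. ennreal (exp (t*x)) \<partial>\<nu>)"
    hence "(\<integral>\<^sup>+x. ennreal (exp (t*x)) \<partial>\<nu>) = 0" by simp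
    hence "AE x in \<nu>. ennreal (exp (t*x)) = 0"
      by (subst nn_integral_0_iff_AE[symmetric]) (auto simp: measurable_cong_sets[OF sb refl])
    hence "AE x in \<nu>. False" by simp
    thus False by (simp add: AE_False emeasure_space_1)
  qed
qed

theorem theorem2:
  fixes N \<beta> :: nat
  assumes "N \<ge> 2" and "\<beta> = 1 \<or> \<beta> = 2"
  shows "\<not> infinitely_divisible (lambda_max_law \<beta> N)"
proof
  assume ID: "infinitely_divisible (lambda_max_law \<beta> N)"
  have b1: "\<beta> \<ge> 1" using assms(2) by auto
  have N1: "N \<ge> 1" using assms(1) by simp
  have bp: "real \<beta> > 0" using b1 by simp
  have Np: "real N > 0" using N1 by simp
  define m where "m = real (2*N*\<beta>)"
  define K where "K = 2 * sqrt (pi/(real \<beta>/4))"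
  define A where "A = (2*real N+1)\<^sup>2 + 4 * real N ^ 3"
  define q where "q = (\<lambda>t. enn2real (Qf \<beta> N t))"
  have Kp: "K > 0" using bp by (simp add: K_def)
  have Qfin: "Qf \<beta> N t < \<infinity>" for t
  proof (cases "t \<ge> 0")
    case True
    show ?thesis using Q_upper_pos[OF b1 N1 True] by (simp add: le_less_trans[OF _ ennreal_less_top])
  next
    case False
    hence "-t \<ge> 0" by simp
    from Q_upper_neg[OF b1 N1 this] show ?thesis by (simp add: le_less_trans[OF _ ennreal_less_top])
  qed
  have Qe: "Qf \<beta> N t = ennreal (q t)" for t
    unfolding q_def using Qfin[of t] by simp
  have q0: "q t \<ge> 0" for t unfolding q_def by simp
  have lowq: "- (real \<beta>/4) * A + t\<^sup>2 / real \<beta> \<le> ln (q t)" if t: "t \<ge> 0" for t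
  proof -
    have "ennreal (exp (- (real \<beta>/4) * A) * exp (t\<^sup>2 / real \<beta>)) \<le> ennreal (q t)"
      using Q_lower[OF b1 N1 t] unfolding A_def Qe .
    hence le: "exp (- (real \<beta>/4) * A) * exp (t\<^sup>2 / real \<beta>) \<le> q t"
      using q0[of t] by (subst (asm) ennreal_le_iff) auto
    have "- (real \<beta>/4) * A + t\<^sup>2 / real \<beta> = ln (exp (- (real \<beta>/4) * A) * exp (t\<^sup>2 / real \<beta>))"
      by (simp add: exp_add[symmetric])
    also have "\<dots> \<le> ln (q t)" using le by (intro ln_mono) auto
    finally show ?thesis .
  qed
  have qpos0: "q 0 > 0"
  proof -
    have "exp (- (real \<beta>/4) * A) * exp (0\<^sup>2 / real \<beta>) \<le> q 0"
      using Q_lower[OF b1 N1 order_refl] q0[of 0] unfolding A_def Qe by (subst (asm) ennreal_le_iff) auto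
    moreover have "exp (- (real \<beta>/4) * A) * exp (0\<^sup>2 / real \<beta>) > 0" by simp
    ultimately show ?thesis by linarith
  qed
  have mgf: "(\<integral>\<^sup>+x. ennreal (exp (t*x)) \<partial>lambda_max_law \<beta> N) = ennreal (q t / q 0)" for t
    unfolding mgf_lmax Qe using qpos0 q0[of t] by (simp add: divide_ennreal)
  have fin: "\<And>t. (\<integral>\<^sup>+x. ennreal (exp (t*x)) \<partial>lambda_max_law \<beta> N) < \<infinity>"
    unfolding mgf by simp
  define F where "F = (\<lambda>t. enn2real (\<integral>\<^sup>+x. ennreal (exp (t*x)) \<partial>lambda_max_law \<beta> N))"
  have Fq: "F t = q t / q 0" for t unfolding F_def mgf using qpos0 q0[of t] by simp
  have qpos: "q t > 0" for t
  proof -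
    have "0 < ennreal (q t / q 0)" using ID_pos[OF ID, of t] unfolding mgf .
    hence "q t / q 0 > 0" by simp
    thus ?thesis using qpos0 q0[of t] by (simp add: zero_less_divide_iff)
  qed
  have lnF: "ln (F t) = ln (q t) - ln (q 0)" for t unfolding Fq using qpos[of t] qpos0 by (simp add: ln_div)
  have upos: "ln (q t) \<le> ln (real N) + real N * ln K + ((t+m)\<^sup>2 + (real N - 1)*m\<^sup>2) / real \<beta>"
    if t: "t \<ge> 0" for t
  proof -
    have "ennreal (q t) \<le> ennreal (real N * (K^N * exp (((t+m)\<^sup>2 + (real N - 1)*m\<^sup>2) / real \<beta>)))"
      using Q_upper_pos[OF b1 N1 t] unfolding Qe K_def m_def .
    hence le: "q t \<le> real N * (K^N * exp (((t+m)\<^sup>2 + (real N - 1)*m\<^sup>2) / real \<beta>))"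
      using Kp by (subst (asm) ennreal_le_iff) auto
    have "ln (q t) \<le> ln (real N * (K^N * exp (((t+m)\<^sup>2 + (real N - 1)*m\<^sup>2) / real \<beta>)))"
      using le qpos[of t] by (intro ln_mono) auto
    also have "\<dots> = ln (real N) + real N * ln K + ((t+m)\<^sup>2 + (real N - 1)*m\<^sup>2) / real \<beta>"
      using Np Kp by (simp add: ln_mult ln_realpow)
    finally show ?thesis .
  qed
  have uneg: "ln (q (-u)) \<le> real N * ln K + real N * (u / real N + m)\<^sup>2 / real \<beta>"
    if u: "u \<ge> 0" for u
  proof -
    have "ennreal (q (-u)) \<le> ennreal (K^N * exp (real N * (u / real N + m)\<^sup>2 / real \<beta>))"
      using Q_upper_neg[OF b1 N1 u] unfolding Qe K_def m_def .
    hence le: "q (-u) \<le> K^N * exp (real N * (u / real N + m)\<^sup>2 / real \<beta>)"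
      using Kp by (subst (asm) ennreal_le_iff) auto
    have "ln (q (-u)) \<le> ln (K^N * exp (real N * (u / real N + m)\<^sup>2 / real \<beta>))"
      using le qpos[of "-u"] by (intro ln_mono) auto
    also have "\<dots> = real N * ln K + real N * (u / real N + m)\<^sup>2 / real \<beta>"
      using Np Kp by (simp add: ln_mult ln_realpow)
    finally show ?thesis .
  qed
  define a where "a = (1 / real N - 1) / real \<beta>"
  define bb where "bb = 20 * m / real \<beta>"
  define cc where "cc = 8 * real N * ln K + 7 * ln (real N) + 8 * real N * m\<^sup>2 / real \<beta> + 2 * real \<beta> * A"
  have aneg: "a < 0"
  proof -
    have "1 / real N < 1" using assms(1) by simp
    thus ?thesis unfolding a_def using bp by (simp add: divide_neg_pos)
  qed
  obtain h where hp: "h > 0" and neg: "a*h\<^sup>2 + bb*h + cc < 0" using quad_neg[OF aneg] by blast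
  have D: "4 * ln (F (-h + h)) + 4 * ln (F (-h + 3*h)) \<le> ln (F (-h)) + 6 * ln (F (-h + 2*h)) + ln (F (-h + 4*h))"
    unfolding F_def by (rule ID_diff4[OF ID fin])
  have e1: "-h + h = 0" and e2: "-h + 3*h = 2*h" and e3: "-h + 2*h = h" and e4: "-h + 4*h = 3*h" by simp_all
  have D2: "4 * ln (q (2*h)) + 4 * ln (q 0) \<le> ln (q (-h)) + 6 * ln (q h) + ln (q (3*h))"
    using D unfolding e1 e2 e3 e4 lnF by simp
  define P1 where "P1 = - (real \<beta>/4) * A + (2*h)\<^sup>2 / real \<beta>"
  define P2 where "P2 = - (real \<beta>/4) * A + 0\<^sup>2 / real \<beta>"
  define U1 where "U1 = real N * ln K + real N * (h / real N + m)\<^sup>2 / real \<beta>"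
  define U2 where "U2 = ln (real N) + real N * ln K + ((h+m)\<^sup>2 + (real N - 1)*m\<^sup>2) / real \<beta>"
  define U3 where "U3 = ln (real N) + real N * ln K + ((3*h+m)\<^sup>2 + (real N - 1)*m\<^sup>2) / real \<beta>"
  have l1: "P1 \<le> ln (q (2*h))" unfolding P1_def using lowq[of "2*h"] hp by simp
  have l2: "P2 \<le> ln (q 0)" unfolding P2_def using lowq[of 0] by simp
  have u1: "ln (q (-h)) \<le> U1" unfolding U1_def using uneg[of h] hp by simp
  have u2: "ln (q h) \<le> U2" unfolding U2_def using upos[of h] hp by simp
  have u3: "ln (q (3*h)) \<le> U3" unfolding U3_def using upos[of "3*h"] hp by simp
  have "4 * P1 + 4 * P2 \<le> U1 + 6 * U2 + U3"
    using D2 l1 l2 u1 u2 u3 by linarith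
  moreover have "U1 + 6 * U2 + U3 - (4 * P1 + 4 * P2) = a*h\<^sup>2 + bb*h + cc"
    unfolding a_def bb_def cc_def P1_def P2_def U1_def U2_def U3_def using Np bp
    by (simp add: field_simps power2_eq_square)
  ultimately show False using neg by linarith
qed


end
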